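(* Let $(X,d)$ be a compact metric space and let $f:X\to X$ be a continuous map. Then there is no subsystem $(Y,f|_Y)$ of $(X,f)$ such that the chain components poset $(\mathfrak{C}(Y,f|_Y),\preceq)$ is linearly and densely ordered.
   Context: A subsystem of $(X,f)$ is a pair $(Y,f|_Y)$ with $Y\subseteq X$ closed and $f$-invariant, i.e. $f(Y)\subseteq Y$. For a metric space $(Z,d)$ and map $g:Z\to Z$: an $\varepsilon$-chain from $x$ to $y$ is a finite sequence $x_0=x,\dots,x_n=y$ in $Z$, $n\ge1$, with $d(g(x_i),x_{i+1})<\varepsilon$; $x\,\mathcal{C}\,y$ iff for every $\varepsilon>0$ there is an $\varepsilon$-chain from $x$ to $y$; $CR(Z,g)=\{x:x\,\mathcal{C}\,x\}$; $x\,E\,y$ iff $x\,\mathcal{C}\,y$ and $y\,\mathcal{C}\,x$; $\mathfrak{C}(Z,g)=CR(Z,g)/E$ (chain components), ordered by $[x]\preceq[y]$ iff $y\,\mathcal{C}\,x$. A poset is densely ordered if it has at least two elements and for every $a<b$ there is $c$ with $a<c<b$. *)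

theory Defs
  imports "HOL-Analysis.Analysis"
begin

definition eps_chain :: "'a::metric_space set \<Rightarrow> ('a \<Rightarrow> 'a) \<Rightarrow> real \<Rightarrow> 'a \<Rightarrow> 'a \<Rightarrow> bool" where
  "eps_chain Z g e x y \<longleftrightarrow>
     (\<exists>n::nat. \<exists>xs::nat \<Rightarrow> 'a. n \<ge> 1 \<and> xs 0 = x \<and> xs n = y \<and> (\<forall>i\<le>n. xs i \<in> Z)
        \<and> (\<forall>i<n. dist (g (xs i)) (xs (Suc i)) < e))"

definition chain_rel :: "'a::metric_space set \<Rightarrow> ('a \<Rightarrow> 'a) \<Rightarrow> 'a \<Rightarrow> 'a \<Rightarrow> bool" where
  "chain_rel Z g x y \<longleftrightarrow> (\<forall>e>0. eps_chain Z g e x y)"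

definition chain_recurrent :: "'a::metric_space set \<Rightarrow> ('a \<Rightarrow> 'a) \<Rightarrow> 'a set" where
  "chain_recurrent Z g = {x \<in> Z. chain_rel Z g x x}"

definition chain_equiv :: "'a::metric_space set \<Rightarrow> ('a \<Rightarrow> 'a) \<Rightarrow> ('a \<times> 'a) set" where
  "chain_equiv Z g = {(x, y). x \<in> chain_recurrent Z g \<and> y \<in> chain_recurrent Z g
                        \<and> chain_rel Z g x y \<and> chain_rel Z g y x}"

definition chain_components :: "'a::metric_space set \<Rightarrow> ('a \<Rightarrow> 'a) \<Rightarrow> 'a set set" where
  "chain_components Z g = chain_recurrent Z g // chain_equiv Z g"

definition comp_le :: "'a::metric_space set \<Rightarrow> ('a \<Rightarrow> 'a) \<Rightarrow> 'a set \<Rightarrow> 'a set \<Rightarrow> bool" where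
  "comp_le Z g A B \<longleftrightarrow> (\<exists>x\<in>A. \<exists>y\<in>B. chain_rel Z g y x)"

definition linearly_densely_ordered :: "'b set \<Rightarrow> ('b \<Rightarrow> 'b \<Rightarrow> bool) \<Rightarrow> bool" where
  "linearly_densely_ordered P le \<longleftrightarrow>
     (\<forall>a\<in>P. \<forall>b\<in>P. le a b \<or> le b a) \<and>
     (\<exists>a\<in>P. \<exists>b\<in>P. a \<noteq> b) \<and>
     (\<forall>a\<in>P. \<forall>b\<in>P. le a b \<and> a \<noteq> b \<longrightarrow> (\<exists>c\<in>P. le a c \<and> a \<noteq> c \<and> le c b \<and> c \<noteq> b))"

end

theory Submission
  imports Defs
begin

lemma chain_mono: "eps_chain Z g e x y \<Longrightarrow> e \<le> e' \<Longrightarrow> eps_chain Z g e' x y"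
  unfolding eps_chain_def
  apply (elim exE conjE)
  subgoal for n xs by (rule exI[of _ n], rule exI[of _ xs]) (auto intro: less_le_trans)
  done

lemma chain_in: "eps_chain Z g e x y \<Longrightarrow> x \<in> Z \<and> y \<in> Z"
  unfolding eps_chain_def by (metis le0 order_refl)

lemma chain_trans:
  assumes "eps_chain Z g e x y" "eps_chain Z g e y z"
  shows "eps_chain Z g e x z"
proof -
  obtain n xs where A: "n \<ge> 1" "xs 0 = x" "xs n = y" "\<forall>i\<le>n. xs i \<in> Z"
      "\<forall>i<n. dist (g (xs i)) (xs (Suc i)) < e" using assms(1) unfolding eps_chain_def by blast
  obtain m ys where B: "m \<ge> 1" "ys 0 = y" "ys m = z" "\<forall>i\<le>m. ys i \<in> Z"
      "\<forall>i<m. dist (g (ys i)) (ys (Suc i)) < e" using assms(2) unfolding eps_chain_def by blast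
  define zs where "zs i = (if i \<le> n then xs i else ys (i - n))" for i
  have "zs 0 = x" using A by (simp add: zs_def)
  moreover have "zs (n+m) = z" using A B by (simp add: zs_def)
  moreover have "\<forall>i\<le>n+m. zs i \<in> Z" using A B by (simp add: zs_def)
  moreover have "\<forall>i<n+m. dist (g (zs i)) (zs (Suc i)) < e"
  proof (intro allI impI)
    fix i assume i: "i < n + m"
    show "dist (g (zs i)) (zs (Suc i)) < e"
    proof (cases "i < n")
      case True then show ?thesis using A by (simp add: zs_def)
    next
      case False
      then have "zs i = ys (i - n)" using A B by (cases "i = n") (auto simp: zs_def)
      moreover have "zs (Suc i) = ys (Suc (i - n))" using False by (simp add: zs_def Suc_diff_le)
      ultimately show ?thesis using B i False by simp
    qed
  qed
  ultimately show ?thesis unfolding eps_chain_def using A B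
    by (intro exI[of _ "n+m"] exI[of _ zs]) auto
qed

lemma chain_end:
  assumes "eps_chain Z g e x y"
  shows "\<exists>r>0. \<forall>y'\<in>Z. dist y y' < r \<longrightarrow> eps_chain Z g e x y'"
proof -
  obtain n xs where A: "n \<ge> 1" "xs 0 = x" "xs n = y" "\<forall>i\<le>n. xs i \<in> Z"
      "\<forall>i<n. dist (g (xs i)) (xs (Suc i)) < e" using assms(1) unfolding eps_chain_def by blast
  obtain k where k: "n = Suc k" using A by (cases n) auto
  define r where "r = e - dist (g (xs k)) y"
  have lk: "dist (g (xs k)) (xs n) < e" using A(5) k by auto
  have "r > 0" using A k lk by (simp add: r_def)
  moreover have "eps_chain Z g e x y'" if "y' \<in> Z" "dist y y' < r" for y'
  proof -
    define zs where "zs = xs(n := y')"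
    have "\<forall>i<n. dist (g (zs i)) (zs (Suc i)) < e"
    proof (intro allI impI)
      fix i assume "i < n"
      show "dist (g (zs i)) (zs (Suc i)) < e"
      proof (cases "i = k")
        case True
        have "dist (g (xs k)) y' \<le> dist (g (xs k)) y + dist y y'" by (rule dist_triangle)
        then show ?thesis using True that k lk A(3) by (simp add: zs_def r_def)
      next
        case False then show ?thesis using A \<open>i<n\<close> k by (simp add: zs_def)
      qed
    qed
    then show ?thesis unfolding eps_chain_def using A that
      by (intro exI[of _ n] exI[of _ zs]) (auto simp: zs_def)
  qed
  ultimately show ?thesis by blast
qed

lemma chain_end2:
  assumes "eps_chain Z g e x y" "y' \<in> Z" "dist y y' < d"
  shows "eps_chain Z g (e + d) x y'"
proof -
  obtain n xs where A: "n \<ge> 1" "xs 0 = x" "xs n = y" "\<forall>i\<le>n. xs i \<in> Z"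
      "\<forall>i<n. dist (g (xs i)) (xs (Suc i)) < e" using assms(1) unfolding eps_chain_def by blast
  obtain k where k: "n = Suc k" using A by (cases n) auto
  define zs where "zs = xs(n := y')"
  have lk: "dist (g (xs k)) (xs n) < e" using A(5) k by auto
  have "\<forall>i<n. dist (g (zs i)) (zs (Suc i)) < e + d"
  proof (intro allI impI)
    fix i assume "i < n"
    show "dist (g (zs i)) (zs (Suc i)) < e + d"
    proof (cases "i = k")
      case True
      have "dist (g (xs k)) y' \<le> dist (g (xs k)) y + dist y y'" by (rule dist_triangle)
      then show ?thesis using True assms k A lk by (simp add: zs_def)
    next
      case False then show ?thesis using A \<open>i<n\<close> k assms(3)
        by (simp add: zs_def) (smt (verit) zero_le_dist)
    qed
  qed
  then show ?thesis unfolding eps_chain_def using A assms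
    by (intro exI[of _ n] exI[of _ zs]) (auto simp: zs_def)
qed

lemma chain_start:
  assumes "eps_chain Z g e x y" "x' \<in> Z" "dist (g x) (g x') < d"
  shows "eps_chain Z g (e + d) x' y"
proof -
  obtain n xs where A: "n \<ge> 1" "xs 0 = x" "xs n = y" "\<forall>i\<le>n. xs i \<in> Z"
      "\<forall>i<n. dist (g (xs i)) (xs (Suc i)) < e" using assms(1) unfolding eps_chain_def by blast
  define zs where "zs = xs(0 := x')"
  have l0: "dist (g x) (xs 1) < e" using A(5) A(1) A(2) by auto
  have "\<forall>i<n. dist (g (zs i)) (zs (Suc i)) < e + d"
  proof (intro allI impI)
    fix i assume "i < n"
    show "dist (g (zs i)) (zs (Suc i)) < e + d"
    proof (cases "i = 0")
      case True
      have "dist (g x') (xs 1) \<le> dist (g x') (g x) + dist (g x) (xs 1)" by (rule dist_triangle)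
      then show ?thesis using True assms A l0 \<open>i<n\<close> by (simp add: zs_def dist_commute)
    next
      case False then show ?thesis using A \<open>i<n\<close> assms(3)
        by (simp add: zs_def) (smt (verit) zero_le_dist)
    qed
  qed
  then show ?thesis unfolding eps_chain_def using A assms
    by (intro exI[of _ n] exI[of _ zs]) (auto simp: zs_def)
qed

lemma rel_trans: "chain_rel Z g x y \<Longrightarrow> chain_rel Z g y z \<Longrightarrow> chain_rel Z g x z"
  unfolding chain_rel_def by (meson chain_trans)


lemma finite_bottom:
  assumes tot: "\<And>x y. x\<in>S \<Longrightarrow> y\<in>S \<Longrightarrow> r x y \<or> r y x"
    and tr: "\<And>x y z. x\<in>S \<Longrightarrow> y\<in>S \<Longrightarrow> z\<in>S \<Longrightarrow> r x y \<Longrightarrow> r y z \<Longrightarrow> r x z"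
    and fin: "finite G" and ne: "G \<noteq> {}"
  shows "G \<subseteq> S \<Longrightarrow> \<exists>m\<in>G. \<forall>x\<in>G. r x m"
  using fin ne
proof (induction G rule: finite_ne_induct)
  case (singleton x)
  then have "r x x" using tot by blast
  then show ?case by blast
next
  case (insert x F)
  have FS: "F \<subseteq> S" "x \<in> S" using insert.prems by auto
  obtain m where m: "m \<in> F" "\<forall>y\<in>F. r y m" using insert.IH[OF FS(1)] by blast
  have mS: "m \<in> S" using m FS by blast
  show ?case
  proof (cases "r x m")
    case True then show ?thesis using m by blast
  next
    case False
    then have rm: "r m x" using tot[OF mS FS(2)] by blast
    have rx: "r x x" using tot[OF FS(2) FS(2)] by blast
    have "\<forall>y\<in>insert x F. r y x"
    proof
      fix y assume "y \<in> insert x F"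
      then show "r y x"
      proof
        assume "y = x" then show ?thesis using rx by simp
      next
        assume y: "y \<in> F"
        then have "r y m" using m by blast
        moreover have "y \<in> S" using y FS by blast
        ultimately show ?thesis using tr[OF _ mS FS(2) _ rm] by blast
      qed
    qed
    then show ?thesis by blast
  qed
qed

lemma cont_eps:
  assumes "continuous_on Y f" "z \<in> Y" "e > 0"
  shows "\<exists>d>0. \<forall>y\<in>Y. dist y z < d \<longrightarrow> dist (f y) (f z) < e"
  using assms unfolding continuous_on_iff by blast

lemma closure_in:
  assumes "closed Y" "S \<subseteq> Y" "z \<in> closure S" shows "z \<in> Y"
  using assms closure_minimal by blast

lemma rel_end_closed:
  assumes "closed Y"
  shows "closed {z. chain_rel Y f q z}"
proof -
  have "z \<in> {z. chain_rel Y f q z}" if z: "z \<in> closure {z. chain_rel Y f q z}" for z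
  proof -
    have sub: "{z. chain_rel Y f q z} \<subseteq> Y"
    proof
      fix x assume "x \<in> {z. chain_rel Y f q z}"
      then have "eps_chain Y f 1 q x" unfolding chain_rel_def by simp
      then show "x \<in> Y" using chain_in by blast
    qed
    have zY: "z \<in> Y" using closure_in[OF assms sub z] .
    have "eps_chain Y f e q z" if e: "e > 0" for e
    proof -
      have he: "e/2 > 0" using e by simp
      have "\<forall>\<epsilon>>0. \<exists>y\<in>{z. chain_rel Y f q z}. dist y z < \<epsilon>"
        using z unfolding closure_approachable .
      then have "\<exists>y\<in>{z. chain_rel Y f q z}. dist y z < e/2"
        using he by blast
      then obtain y where y: "chain_rel Y f q y" "dist y z < e/2" by blast
      have "eps_chain Y f (e/2) q y" using y e unfolding chain_rel_def by simp
      from chain_end2[OF this zY, of "e/2"] y show ?thesis by (simp add: dist_commute)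
    qed
    then show ?thesis unfolding chain_rel_def by simp
  qed
  then show ?thesis using closure_subset_eq by blast
qed

lemma rel_start_closed:
  assumes "closed Y" "continuous_on Y f"
  shows "closed {z. chain_rel Y f z p}"
proof -
  have "z \<in> {z. chain_rel Y f z p}" if z: "z \<in> closure {z. chain_rel Y f z p}" for z
  proof -
    have sub: "{z. chain_rel Y f z p} \<subseteq> Y"
    proof
      fix x assume "x \<in> {z. chain_rel Y f z p}"
      then have "eps_chain Y f 1 x p" unfolding chain_rel_def by simp
      then show "x \<in> Y" using chain_in by blast
    qed
    have zY: "z \<in> Y" using closure_in[OF assms(1) sub z] .
    have "eps_chain Y f e z p" if e: "e > 0" for e
    proof -
      obtain d where d: "d > 0" "\<forall>y\<in>Y. dist y z < d \<longrightarrow> dist (f y) (f z) < e/2"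
        using cont_eps[OF assms(2) zY, of "e/2"] e by auto
      have "\<forall>\<epsilon>>0. \<exists>y\<in>{z. chain_rel Y f z p}. dist y z < \<epsilon>"
        using z unfolding closure_approachable .
      then have "\<exists>y\<in>{z. chain_rel Y f z p}. dist y z < d"
        using d(1) by blast
      then obtain y where y: "chain_rel Y f y p" "dist y z < d" by blast
      have "eps_chain Y f (e/2) y p" using y e unfolding chain_rel_def by simp
      moreover have "y \<in> Y" using sub y by auto
      ultimately show ?thesis using chain_start[OF _ zY, of f "e/2" y p "e/2"] d y by simp
    qed
    then show ?thesis unfolding chain_rel_def by simp
  qed
  then show ?thesis using closure_subset_eq by blast
qed

lemma CR_closed:
  assumes "closed Y" "continuous_on Y f"
  shows "closed (chain_recurrent Y f)"
proof -
  have "z \<in> chain_recurrent Y f" if z: "z \<in> closure (chain_recurrent Y f)" for z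
  proof -
    have sub: "chain_recurrent Y f \<subseteq> Y" unfolding chain_recurrent_def by auto
    have zY: "z \<in> Y" using closure_in[OF assms(1) sub z] .
    have "eps_chain Y f e z z" if e: "e > 0" for e
    proof -
      obtain d where d: "d > 0" "\<forall>y\<in>Y. dist y z < d \<longrightarrow> dist (f y) (f z) < e/3"
        using cont_eps[OF assms(2) zY, of "e/3"] e by auto
      have he: "min d (e/3) > 0" using e d by simp
      have "\<forall>\<epsilon>>0. \<exists>y\<in>chain_recurrent Y f. dist y z < \<epsilon>"
        using z unfolding closure_approachable .
      then obtain y where y: "y \<in> chain_recurrent Y f" "dist y z < min d (e/3)"
        using he by blast
      have "eps_chain Y f (e/3) y y" using y e unfolding chain_rel_def chain_recurrent_def by simp
      moreover have "y \<in> Y" using sub y by auto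
      ultimately have "eps_chain Y f (e/3 + e/3) z y"
        using chain_start[OF _ zY, of f "e/3" y y "e/3"] d y by simp
      from chain_end2[OF this zY, of "e/3"] y have "eps_chain Y f (e/3 + e/3 + e/3) z z"
        by (simp add: dist_commute)
      then show ?thesis by simp
    qed
    then show ?thesis unfolding chain_rel_def chain_recurrent_def using zY by simp
  qed
  then show ?thesis using closure_subset_eq by blast
qed


theorem corollary2p2:
  fixes X :: "'a::metric_space set" and f :: "'a \<Rightarrow> 'a"
  assumes "compact X" and "continuous_on X f" and "f ` X \<subseteq> X"
  shows "\<not> (\<exists>Y. Y \<subseteq> X \<and> closed Y \<and> f ` Y \<subseteq> Y \<and>
             linearly_densely_ordered (chain_components Y f) (comp_le Y f))"
proof
  assume "\<exists>Y. Y \<subseteq> X \<and> closed Y \<and> f ` Y \<subseteq> Y \<and>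
             linearly_densely_ordered (chain_components Y f) (comp_le Y f)"
  then obtain Y where YX: "Y \<subseteq> X" and clY: "closed Y"
    and ldo: "linearly_densely_ordered (chain_components Y f) (comp_le Y f)" by blast
  have cY: "compact Y" using compact_Int_closed[OF assms(1) clY] YX by (simp add: Int_absorb1)
  have contY: "continuous_on Y f" using continuous_on_subset[OF assms(2) YX] .
  define CR where "CR = chain_recurrent Y f"
  define C where "C = chain_rel Y f"
  define cls where "cls x = chain_equiv Y f `` {x}" for x
  have CRY: "CR \<subseteq> Y" unfolding CR_def chain_recurrent_def by auto
  have CRrefl: "C x x" if "x \<in> CR" for x using that unfolding CR_def C_def chain_recurrent_def by simp
  have Ctr: "C x z" if "C x y" "C y z" for x y z using that rel_trans unfolding C_def by metis
  have cls_mem: "cls x \<in> chain_components Y f" if "x \<in> CR" for x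
    unfolding cls_def chain_components_def using that CR_def by (simp add: quotientI)
  have cls_iff: "y \<in> cls x \<longleftrightarrow> x \<in> CR \<and> y \<in> CR \<and> C x y \<and> C y x" for x y
    unfolding cls_def chain_equiv_def CR_def C_def by simp
  have self: "x \<in> cls x" if "x \<in> CR" for x using that CRrefl cls_iff by blast
  have comp_cls: "comp_le Y f (cls x) (cls y) \<longleftrightarrow> C y x" if "x \<in> CR" "y \<in> CR" for x y
  proof
    assume "comp_le Y f (cls x) (cls y)"
    then obtain x' y' where "x' \<in> cls x" "y' \<in> cls y" "C y' x'"
      unfolding comp_le_def C_def by blast
    then show "C y x" using cls_iff Ctr by blast
  next
    assume "C y x"
    then show "comp_le Y f (cls x) (cls y)"
      unfolding comp_le_def C_def using self that by blast
  qed
  have cls_eq: "cls x = cls y" if "x \<in> CR" "y \<in> CR" "C x y" "C y x" for x y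
  proof -
    have "z \<in> cls x \<longleftrightarrow> z \<in> cls y" for z
      using that cls_iff Ctr by blast
    then show ?thesis by blast
  qed
  have cls_of: "\<exists>x\<in>CR. A = cls x" if "A \<in> chain_components Y f" for A
    using that unfolding chain_components_def cls_def CR_def by (auto elim!: quotientE)
  have ld1: "\<forall>a\<in>chain_components Y f. \<forall>b\<in>chain_components Y f.
      comp_le Y f a b \<or> comp_le Y f b a"
    and ld2: "\<exists>a\<in>chain_components Y f. \<exists>b\<in>chain_components Y f. a \<noteq> b"
    and ld3: "\<forall>a\<in>chain_components Y f. \<forall>b\<in>chain_components Y f.
      comp_le Y f a b \<and> a \<noteq> b \<longrightarrow> (\<exists>c\<in>chain_components Y f.
         comp_le Y f a c \<and> a \<noteq> c \<and> comp_le Y f c b \<and> c \<noteq> b)"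
    using ldo unfolding linearly_densely_ordered_def by blast+
  have lin: "C x y \<or> C y x" if "x \<in> CR" "y \<in> CR" for x y
  proof -
    have "comp_le Y f (cls x) (cls y) \<or> comp_le Y f (cls y) (cls x)"
      using ld1 cls_mem that by blast
    then show ?thesis using comp_cls that by blast
  qed
  obtain a b where ab: "a \<in> CR" "b \<in> CR" "\<not> C a b"
  proof -
    obtain A B where AB: "A \<in> chain_components Y f" "B \<in> chain_components Y f" "A \<noteq> B"
      using ld2 by blast
    obtain x y where xy: "x \<in> CR" "y \<in> CR" "A = cls x" "B = cls y" using cls_of AB by metis
    have "\<not> (C x y \<and> C y x)" using cls_eq xy AB(3) by blast
    then show ?thesis using that xy by blast
  qed
  obtain e0 where e0: "e0 > 0" "\<not> eps_chain Y f e0 a b"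
    using ab(3) unfolding C_def chain_rel_def by blast
  define R where "R = {y. eps_chain Y f e0 a y}"
  define P where "P = CR \<inter> R"
  define Q where "Q = CR - R"
  have Rdown: "z \<in> R" if "w \<in> R" "C w z" for w z
    using that e0(1) chain_trans unfolding R_def C_def chain_rel_def by blast
  have aP: "a \<in> P" using ab CRrefl e0(1) unfolding P_def R_def C_def chain_rel_def by blast
  have bQ: "b \<in> Q" using ab e0 unfolding Q_def R_def by blast
  have CRcl: "closed CR" unfolding CR_def using CR_closed[OF clY contY] .
  have clP: "closed P"
  proof -
    have "z \<in> P" if z: "z \<in> closure P" for z
    proof -
      have zCR: "z \<in> CR" using z CRcl closure_mono[of P CR] P_def closure_closed by blast
      have zY: "z \<in> Y" using zCR CRY by blast
      obtain d where d: "d > 0" "\<forall>y\<in>Y. dist y z < d \<longrightarrow> dist (f y) (f z) < e0/2"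
        using cont_eps[OF contY zY, of "e0/2"] e0 by auto
      have "\<forall>\<epsilon>>0. \<exists>y\<in>P. dist y z < \<epsilon>" using z unfolding closure_approachable .
      then obtain u where u: "u \<in> P" "dist u z < d" using d(1) by blast
      have uY: "u \<in> Y" using u CRY P_def by blast
      have "eps_chain Y f (e0/2) z z" using CRrefl[OF zCR] e0 unfolding C_def chain_rel_def by simp
      moreover have "dist (f z) (f u) < e0/2" using d u uY by (simp add: dist_commute)
      ultimately have "eps_chain Y f (e0/2 + e0/2) u z" using chain_start[OF _ uY] by blast
      then have "eps_chain Y f e0 u z" by simp
      moreover have "eps_chain Y f e0 a u" using u unfolding P_def R_def by blast
      ultimately have "z \<in> R" unfolding R_def using chain_trans by blast
      then show ?thesis using zCR P_def by blast
    qed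
    then show ?thesis using closure_subset_eq by blast
  qed
  have clQ: "closed Q"
  proof -
    have "z \<in> Q" if z: "z \<in> closure Q" for z
    proof -
      have zCR: "z \<in> CR" using z CRcl closure_mono[of Q CR] Q_def closure_closed by blast
      have "z \<notin> R"
      proof
        assume "z \<in> R"
        then obtain r where r: "r > 0" "\<forall>y'\<in>Y. dist z y' < r \<longrightarrow> eps_chain Y f e0 a y'"
          using chain_end unfolding R_def by blast
        have "\<forall>\<epsilon>>0. \<exists>y\<in>Q. dist y z < \<epsilon>" using z unfolding closure_approachable .
        then obtain u where u: "u \<in> Q" "dist u z < r" using r(1) by blast
        have uY: "u \<in> Y" using u CRY Q_def by blast
        then have "u \<in> R" using r u unfolding R_def by (simp add: dist_commute)
        then show False using u Q_def by blast
      qed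
      then show ?thesis using zCR Q_def by blast
    qed
    then show ?thesis using closure_subset_eq by blast
  qed
  have "Y \<inter> P = P" using CRY P_def by blast
  then have cP: "compact P" using compact_Int_closed[OF cY clP] by simp
  have "Y \<inter> Q = Q" using CRY Q_def by blast
  then have cQ: "compact Q" using compact_Int_closed[OF cY clQ] by simp
  have totC: "\<And>x y. x\<in>CR \<Longrightarrow> y\<in>CR \<Longrightarrow> C x y \<or> C y x" using lin by blast
  have totC': "\<And>x y. x\<in>CR \<Longrightarrow> y\<in>CR \<Longrightarrow> (\<lambda>x y. C y x) x y \<or> (\<lambda>x y. C y x) y x" using lin by blast
  have trC: "\<And>x y z. x\<in>CR \<Longrightarrow> y\<in>CR \<Longrightarrow> z\<in>CR \<Longrightarrow> C x y \<Longrightarrow> C y z \<Longrightarrow> C x z" using Ctr by blast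
  have trC': "\<And>x y z. x\<in>CR \<Longrightarrow> y\<in>CR \<Longrightarrow> z\<in>CR \<Longrightarrow> (\<lambda>x y. C y x) x y \<Longrightarrow>
      (\<lambda>x y. C y x) y z \<Longrightarrow> (\<lambda>x y. C y x) x z" using Ctr by blast
  have "Q \<inter> (\<Inter>q\<in>Q. {z. C q z}) \<noteq> {}"
  proof (rule compact_imp_fip_image[OF cQ])
    show "closed {z. C q z}" for q using rel_end_closed[OF clY] unfolding C_def .
  next
    fix I' assume I': "finite I'" "I' \<subseteq> Q"
    show "Q \<inter> (\<Inter>q\<in>I'. {z. C q z}) \<noteq> {}"
    proof (cases "I' = {}")
      case True then show ?thesis using bQ by auto
    next
      case False
      have "I' \<subseteq> CR" using I' Q_def by blast
      have "\<exists>m\<in>I'. \<forall>x\<in>I'. C x m"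
        apply (rule finite_bottom[where S=CR and r=C and G=I'])
        apply (erule (1) totC)
        apply (erule (4) trC)
        apply (rule I'(1))
        apply (rule False)
        apply (rule \<open>I' \<subseteq> CR\<close>)
        done
      then obtain m where "m \<in> I'" "\<forall>x\<in>I'. C x m" by blast
      then have "m \<in> Q \<inter> (\<Inter>q\<in>I'. {z. C q z})" using I' by blast
      then show ?thesis by blast
    qed
  qed
  then obtain z where z: "z \<in> Q" "\<forall>q\<in>Q. C q z" by blast
  have "P \<inter> (\<Inter>p\<in>P. {z. C z p}) \<noteq> {}"
  proof (rule compact_imp_fip_image[OF cP])
    show "closed {z. C z p}" for p using rel_start_closed[OF clY contY] unfolding C_def .
  next
    fix I' assume I': "finite I'" "I' \<subseteq> P"
    show "P \<inter> (\<Inter>p\<in>I'. {z. C z p}) \<noteq> {}"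
    proof (cases "I' = {}")
      case True then show ?thesis using aP by auto
    next
      case False
      have "I' \<subseteq> CR" using I' P_def by blast
      have "\<exists>m\<in>I'. \<forall>x\<in>I'. C m x"
        apply (rule finite_bottom[where S=CR and r="\<lambda>x y. C y x" and G=I'])
        subgoal for x y using lin[of x y] by blast
        subgoal for x y z using Ctr[of z y x] by blast
        apply (rule I'(1))
        apply (rule False)
        apply (rule \<open>I' \<subseteq> CR\<close>)
        done
      then obtain m where "m \<in> I'" "\<forall>x\<in>I'. C m x" by blast
      then have "m \<in> P \<inter> (\<Inter>p\<in>I'. {z. C z p})" using I' by blast
      then show ?thesis by blast
    qed
  qed
  then obtain w where w: "w \<in> P" "\<forall>p\<in>P. C w p" by blast
  have wCR: "w \<in> CR" and zCR: "z \<in> CR" and wR: "w \<in> R" and zR: "z \<notin> R"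
    using w z P_def Q_def by auto
  have nwz: "\<not> C w z" using Rdown wR zR by blast
  then have Czw: "C z w" using lin wCR zCR by blast
  have le: "comp_le Y f (cls w) (cls z)" using comp_cls wCR zCR Czw by blast
  have ne: "cls w \<noteq> cls z" using self[OF zCR] cls_iff nwz by blast
  obtain c where c: "c \<in> chain_components Y f" "comp_le Y f (cls w) c" "cls w \<noteq> c"
      "comp_le Y f c (cls z)" "c \<noteq> cls z"
    using ld3 cls_mem[OF wCR] cls_mem[OF zCR] le ne by blast
  obtain y where y: "y \<in> CR" "c = cls y" using cls_of c(1) by blast
  have Cyw: "C y w" using comp_cls wCR y c(2) by blast
  have Czy: "C z y" using comp_cls zCR y c(4) by blast
  show False
  proof (cases "y \<in> R")
    case True
    then have "C w y" using w y P_def by blast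
    then have "cls w = cls y" using cls_eq wCR y(1) Cyw by blast
    then show False using c(3) y by simp
  next
    case False
    then have "C y z" using z y Q_def by blast
    then have "cls y = cls z" using cls_eq zCR y(1) Czy by blast
    then show False using c(5) y by simp
  qed
qed

end
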